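(* Let $\{\mathcal{T}_n\}_{n\ge 2}$ be the two-type CMRT with parameters $p\in(0,1]$, $q\in[0,1]$, and for $k\ge 0$ let $N_k(n)$ be the number of vertices of out-degree $k$ in $\mathcal{T}_n$. Then for each fixed $k\ge 0$, $N_k(n)/n\to p_k$ in probability as $n\to\infty$, where $$p_k=\frac{p}{1+r_A^*}\left(\frac{r_A^*}{1+r_A^*}\right)^k+\frac{1-p}{1+r_B^*}\left(\frac{r_B^*}{1+r_B^*}\right)^k,\qquad r_A^*=q+\frac{(1-p)(1-q)}{p},\quad r_B^*=\frac{p(1-q)}{1-p}+q,$$ and when $p=1$ the second term of $p_k$ is interpreted as $0$.
   Context: Two-type Community Modulated Recursive Tree (CMRT) with parameters $p\in(0,1]$, $q\in[0,1]$: $\mathcal{T}_2$ consists of vertex $1$ of type $A$ and vertex $2$ of type $B$ joined by an edge (the roots of type $A$ and $B$). For $n\ge 3$, $\mathcal{T}_n$ is obtained from $\mathcal{T}_{n-1}$ by adding vertex $n$: (1) vertex $n$ is of type $A$ with probability $p$ and of type $B$ with probability $1-p$; (2) with probability $q$ it decides to connect to a vertex of its own type, and with probability $1-q$ to a vertex of the other type; (3) it connects by an edge to an existing vertex of the selected type chosen uniformly at random. All random choices are independent. Edges are viewed as directed from parent (the earlier vertex) to child; the out-degree of a vertex is its number of children. *)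

theory Defs
  imports "HOL-Probability.Probability"
begin

text \<open>A tree T_n is encoded as a list t of length n: entry t!(v-1) = (type, parent)
  describes vertex v (1-indexed). Type True = A, False = B. Parent 0 means "no parent"
  (only vertex 1, the root of type A).\<close>

type_synonym cmrt_tree = "(bool \<times> nat) list"

definition cmrt_init :: cmrt_tree where
  "cmrt_init = [(True, 0), (False, 1)]"

definition verts_of_type :: "cmrt_tree \<Rightarrow> bool \<Rightarrow> nat set" where
  "verts_of_type t ty = {v \<in> {1..length t}. fst (t ! (v - 1)) = ty}"

definition cmrt_step :: "real \<Rightarrow> real \<Rightarrow> cmrt_tree \<Rightarrow> cmrt_tree pmf" where
  "cmrt_step p q t =
     bind_pmf (bernoulli_pmf p) (\<lambda>a.
     bind_pmf (bernoulli_pmf q) (\<lambda>s.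
     bind_pmf (pmf_of_set (verts_of_type t (if s then a else \<not> a))) (\<lambda>v.
     return_pmf (t @ [(a, v)]))))"

text \<open>cmrt_aux p q m is the law of T_(m+2).\<close>
primrec cmrt_aux :: "real \<Rightarrow> real \<Rightarrow> nat \<Rightarrow> cmrt_tree pmf" where
  "cmrt_aux p q 0 = return_pmf cmrt_init"
| "cmrt_aux p q (Suc m) = bind_pmf (cmrt_aux p q m) (cmrt_step p q)"

text \<open>Law of T_n (n \<ge> 2; for n < 2 it is just T_2, irrelevant for the limit).\<close>
definition cmrt :: "real \<Rightarrow> real \<Rightarrow> nat \<Rightarrow> cmrt_tree pmf" where
  "cmrt p q n = cmrt_aux p q (n - 2)"

definition outdeg :: "cmrt_tree \<Rightarrow> nat \<Rightarrow> nat" where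
  "outdeg t v = card {j \<in> {1..length t}. snd (t ! (j - 1)) = v}"

definition Ndeg :: "cmrt_tree \<Rightarrow> nat \<Rightarrow> nat" where
  "Ndeg t k = card {v \<in> {1..length t}. outdeg t v = k}"

definition rA :: "real \<Rightarrow> real \<Rightarrow> real" where
  "rA p q = q + (1 - p) * (1 - q) / p"

definition rB :: "real \<Rightarrow> real \<Rightarrow> real" where
  "rB p q = p * (1 - q) / (1 - p) + q"

definition pk :: "real \<Rightarrow> real \<Rightarrow> nat \<Rightarrow> real" where
  "pk p q k = p / (1 + rA p q) * (rA p q / (1 + rA p q)) ^ k
     + (if p = 1 then 0 else (1 - p) / (1 + rB p q) * (rB p q / (1 + rB p q)) ^ k)"

end

theory Submission
  imports Defs
begin


definition inv_t :: "cmrt_tree \<Rightarrow> bool" where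
  "inv_t t \<longleftrightarrow> length t \<ge> 2 \<and> t ! 0 = (True, 0) \<and> t ! 1 = (False, 1) \<and>
     (\<forall>j\<in>{1..length t}. snd (t ! (j - 1)) < j)"

lemma outdeg_snoc:
  "outdeg (t @ [(a, v)]) w = outdeg t w + (if v = w then 1 else 0)"
proof -
  have eq: "{j \<in> {1..length (t @ [(a, v)])}. snd ((t @ [(a, v)]) ! (j - 1)) = w}
      = {j \<in> {1..length t}. snd (t ! (j - 1)) = w} \<union> (if v = w then {Suc (length t)} else {})"
    by (auto simp: nth_append split: if_splits)
  show ?thesis unfolding outdeg_def eq
    by (subst card_Un_disjoint) auto
qed

lemma outdeg_beyond:
  assumes "inv_t t" "w > length t" shows "outdeg t w = 0"
proof -
  have "{j \<in> {1..length t}. snd (t ! (j - 1)) = w} = {}"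
  proof (rule equals0I)
    fix j assume "j \<in> {j \<in> {1..length t}. snd (t ! (j - 1)) = w}"
    thus False using assms unfolding inv_t_def by fastforce
  qed
  thus ?thesis unfolding outdeg_def by simp
qed

lemma verts_sub: "verts_of_type t ty \<subseteq> {1..length t}"
  unfolding verts_of_type_def by auto

lemma verts_finite: "finite (verts_of_type t ty)"
  using verts_sub finite_subset by blast

lemma verts_nonempty: assumes "inv_t t" shows "verts_of_type t ty \<noteq> {}"
proof -
  have "(if ty then 1 else 2) \<in> verts_of_type t ty"
    using assms unfolding inv_t_def verts_of_type_def by auto
  thus ?thesis by blast
qed

lemma inv_step:
  assumes "inv_t t" "v \<in> verts_of_type t b" shows "inv_t (t @ [(a, v)])"
proof -
  have v: "v \<le> length t" using assms(2) verts_sub[of t b] by auto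
  have "snd ((t @ [(a, v)]) ! (j - 1)) < j" if "j \<in> {1..length (t @ [(a, v)])}" for j
  proof (cases "j = Suc (length t)")
    case True thus ?thesis using v by (simp add: nth_append)
  next
    case False thus ?thesis using that assms(1) unfolding inv_t_def by (auto simp: nth_append)
  qed
  thus ?thesis using assms(1) unfolding inv_t_def by (auto simp: nth_append)
qed

lemma set_step: assumes "inv_t t" "t' \<in> set_pmf (cmrt_step p q t)"
  shows "\<exists>a b v. t' = t @ [(a, v)] \<and> v \<in> verts_of_type t b"
proof -
  from assms(2) obtain a s v where "v \<in> set_pmf (pmf_of_set (verts_of_type t (if s then a else \<not> a)))"
     "t' = t @ [(a, v)]"
    unfolding cmrt_step_def by (auto simp only: set_bind_pmf set_return_pmf)
  moreover have "set_pmf (pmf_of_set (verts_of_type t (if s then a else \<not> a))) = verts_of_type t (if s then a else \<not> a)"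
    by (rule set_pmf_of_set[OF verts_nonempty[OF assms(1)] verts_finite])
  ultimately show ?thesis by blast
qed

lemma finite_step: assumes "inv_t t" shows "finite (set_pmf (cmrt_step p q t))"
proof -
  have "set_pmf (cmrt_step p q t) \<subseteq> (\<lambda>(a,v). t @ [(a, v)]) ` (UNIV \<times> {1..length t})"
  proof
    fix t' assume "t' \<in> set_pmf (cmrt_step p q t)"
    then obtain a b v where "t' = t @ [(a, v)]" "v \<in> verts_of_type t b" using set_step[OF assms] by blast
    thus "t' \<in> (\<lambda>(a,v). t @ [(a, v)]) ` (UNIV \<times> {1..length t})" using verts_sub by fastforce
  qed
  thus ?thesis by (rule finite_subset) auto
qed

lemma inv_step_pmf: assumes "inv_t t" "t' \<in> set_pmf (cmrt_step p q t)"
  shows "inv_t t' \<and> length t' = Suc (length t)"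
  using set_step[OF assms] inv_step[OF assms(1)] by fastforce

lemma aux_props:
  "finite (set_pmf (cmrt_aux p q m)) \<and> (\<forall>t\<in>set_pmf (cmrt_aux p q m). inv_t t \<and> length t = m + 2)"
proof (induction m)
  case 0
  have "\<forall>j\<in>{1..2::nat}. snd ([(True, 0::nat), (False, 1)] ! (j - 1)) < j"
  proof
    fix j :: nat assume "j \<in> {1..2}"
    hence "j = 1 \<or> j = 2" by auto
    thus "snd ([(True, 0::nat), (False, 1)] ! (j - 1)) < j" by auto
  qed
  then show ?case by (simp add: cmrt_init_def inv_t_def)
next
  case (Suc m)
  then show ?case using finite_step inv_step_pmf by fastforce
qed




lemma finite_bool_pmf: "finite (set_pmf (x :: bool pmf))"
  by (rule finite_subset[of _ UNIV]) auto

lemma step_expect: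
  fixes h :: "cmrt_tree \<Rightarrow> real"
  assumes "0 \<le> p" "p \<le> 1" "0 \<le> q" "q \<le> 1" "inv_t t"
  shows "measure_pmf.expectation (cmrt_step p q t) h =
    (\<Sum>a\<in>UNIV. (if a then p else 1 - p) * (\<Sum>s\<in>UNIV. (if s then q else 1 - q) *
       ((\<Sum>v\<in>verts_of_type t (if s then a else \<not> a). h (t @ [(a, v)])) /
          card (verts_of_type t (if s then a else \<not> a)))))"
proof -
  define V where "V = (\<lambda>a s. verts_of_type t (if s then a else \<not> a))"
  have Vf: "finite (V a s)" and Vne: "V a s \<noteq> {}" for a s
    unfolding V_def using verts_finite verts_nonempty[OF assms(5)] by auto
  have inner: "measure_pmf.expectation (bind_pmf (pmf_of_set (V a s)) (\<lambda>v. return_pmf (t @ [(a, v)]))) h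
      = (\<Sum>v\<in>V a s. h (t @ [(a, v)])) / card (V a s)" for a s
    by (subst pmf_expectation_bind_pmf_of_set[OF Vne Vf]) (simp_all add: sum_divide_distrib divide_inverse_commute sum_distrib_left)
  have fin1: "finite (set_pmf (bind_pmf (pmf_of_set (V a s)) (\<lambda>v. return_pmf (t @ [(a, v)]))))" for a s
    using Vf Vne by simp
  have mid: "measure_pmf.expectation (bind_pmf (bernoulli_pmf q) (\<lambda>s. bind_pmf (pmf_of_set (V a s)) (\<lambda>v. return_pmf (t @ [(a, v)])))) h
      = (\<Sum>s\<in>UNIV. (if s then q else 1 - q) * ((\<Sum>v\<in>V a s. h (t @ [(a, v)])) / card (V a s)))" for a
    apply (subst pmf_expectation_bind[of UNIV])
       apply simp
      apply (rule fin1)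
     apply simp
    apply (simp add: UNIV_bool inner assms)
    done
  have fin2: "finite (set_pmf (bind_pmf (bernoulli_pmf q) (\<lambda>s. bind_pmf (pmf_of_set (V a s)) (\<lambda>v. return_pmf (t @ [(a, v)])))))" for a
    using fin1 finite_bool_pmf[of "bernoulli_pmf q"] by (simp only: set_bind_pmf) blast
  show ?thesis
    unfolding cmrt_step_def
    apply (subst pmf_expectation_bind[of UNIV])
       apply simp
      apply (rule fin2[unfolded V_def])
     apply simp
    apply (simp only: UNIV_bool mid[unfolded V_def])
    apply (simp add: assms)
    done
qed




definition Xc :: "cmrt_tree \<Rightarrow> bool \<Rightarrow> (nat \<Rightarrow> bool) \<Rightarrow> real" where
  "Xc t ty P = (\<Sum>v\<in>{1..length t}. if fst (t ! (v - 1)) = ty \<and> P (outdeg t v) then 1 else 0)"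

definition piT :: "real \<Rightarrow> bool \<Rightarrow> real" where
  "piT p ty = (if ty then p else 1 - p)"

definition gam :: "real \<Rightarrow> real \<Rightarrow> bool \<Rightarrow> real" where
  "gam p q ty = (if ty then p * q + (1 - p) * (1 - q) else p * (1 - q) + (1 - p) * q)"

lemma sum_verts: "(\<Sum>v\<in>verts_of_type t ty. g v) = (\<Sum>v\<in>{1..length t}. if fst (t ! (v - 1)) = ty then g v else 0)"
  unfolding verts_of_type_def by (rule sum.inter_filter) simp

lemma card_verts: "real (card (verts_of_type t ty)) = Xc t ty (\<lambda>_. True)"
proof -
  have "real (card (verts_of_type t ty)) = (\<Sum>v\<in>verts_of_type t ty. 1)" by simp
  also have "\<dots> = Xc t ty (\<lambda>_. True)" unfolding sum_verts Xc_def by simp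
  finally show ?thesis .
qed

lemma sum_verts_ind: "(\<Sum>v\<in>verts_of_type t ty. if P (outdeg t v) then 1 else 0) = Xc t ty P"
  unfolding sum_verts Xc_def by (rule sum.cong) auto

lemma sum_change:
  fixes g g' :: "nat \<Rightarrow> real"
  assumes "finite A" "v \<in> A" "\<And>w. w \<in> A \<Longrightarrow> w \<noteq> v \<Longrightarrow> g' w = g w"
  shows "sum g' A = sum g A + g' v - g v"
proof -
  have "sum g' A = g' v + sum g' (A - {v})" using assms by (simp add: sum.remove)
  moreover have "sum g A = g v + sum g (A - {v})" using assms by (simp add: sum.remove)
  moreover have "sum g' (A - {v}) = sum g (A - {v})" using assms by (intro sum.cong) auto
  ultimately show ?thesis by simp
qed

lemma Xc_snoc:
  assumes "inv_t t" "v \<in> {1..length t}"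
  shows "Xc (t @ [(a, v)]) ty P = Xc t ty P + (if a = ty \<and> P 0 then 1 else 0)
     + (if fst (t ! (v - 1)) = ty then (if P (Suc (outdeg t v)) then 1 else 0) - (if P (outdeg t v) then 1 else 0) else 0)"
proof -
  let ?L = "length t"
  let ?t' = "t @ [(a, v)]"
  define g' where "g' = (\<lambda>w. if fst (?t' ! (w - 1)) = ty \<and> P (outdeg ?t' w) then 1 else (0::real))"
  define g where "g = (\<lambda>w. if fst (t ! (w - 1)) = ty \<and> P (outdeg t w) then 1 else (0::real))"
  have last: "g' (Suc ?L) = (if a = ty \<and> P 0 then 1 else 0)"
    using outdeg_beyond[OF assms(1), of "Suc ?L"] assms(2) unfolding g'_def
    by (simp add: nth_append outdeg_snoc)
  have "Xc ?t' ty P = sum g' {1..Suc ?L}" unfolding Xc_def g'_def by simp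
  also have "\<dots> = sum g' {1..?L} + g' (Suc ?L)" by (simp add: sum.cl_ivl_Suc)
  also have "sum g' {1..?L} = sum g {1..?L} + g' v - g v"
  proof (rule sum_change)
    fix w assume "w \<in> {1..?L}" "w \<noteq> v"
    moreover from \<open>w \<in> {1..?L}\<close> have "w - 1 < ?L" by auto
    ultimately show "g' w = g w" unfolding g'_def g_def by (simp add: nth_append outdeg_snoc)
  qed (use assms in auto)
  finally have main: "Xc ?t' ty P = sum g {1..?L} + g' v - g v + g' (Suc ?L)" .
  have gv: "g' v - g v = (if fst (t ! (v - 1)) = ty then (if P (Suc (outdeg t v)) then 1 else 0) - (if P (outdeg t v) then 1 else 0) else 0)"
  proof -
    have "v - 1 < ?L" using assms(2) by auto
    thus ?thesis unfolding g'_def g_def by (simp add: nth_append outdeg_snoc)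
  qed
  show ?thesis using main gv last unfolding Xc_def g_def[symmetric] by simp
qed

lemma step_bound_gen:
  fixes h :: "cmrt_tree \<Rightarrow> real"
  assumes pq: "0 \<le> p" "p \<le> 1" "0 \<le> q" "q \<le> 1" and inv: "inv_t t"
    and hb: "\<And>a b v. v \<in> verts_of_type t b \<Longrightarrow> h (t @ [(a, v)]) \<le> c0 + c1 a + (if b = ty then g v else 0)"
  shows "measure_pmf.expectation (cmrt_step p q t) h \<le>
     c0 + (piT p True * c1 True + piT p False * c1 False)
        + gam p q ty * ((\<Sum>v\<in>verts_of_type t ty. g v) / card (verts_of_type t ty))"
proof -
  define A where "A = (\<lambda>a s. (\<Sum>v\<in>verts_of_type t (if s then a else \<not> a). h (t @ [(a, v)])) /
          card (verts_of_type t (if s then a else \<not> a)))"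
  define G where "G = (\<Sum>v\<in>verts_of_type t ty. g v) / card (verts_of_type t ty)"
  define B where "B = (\<lambda>a s. c0 + c1 a + (if (if s then a else \<not> a) = ty then G else 0))"
  have AB: "A a s \<le> B a s" for a s
  proof -
    let ?b = "if s then a else \<not> a"
    let ?V = "verts_of_type t ?b"
    have cpos: "real (card ?V) > 0"
      using verts_finite verts_nonempty[OF inv] by (simp add: card_gt_0_iff)
    have "(\<Sum>v\<in>?V. h (t @ [(a, v)])) \<le> (\<Sum>v\<in>?V. c0 + c1 a + (if ?b = ty then g v else 0))"
      by (rule sum_mono) (rule hb)
    also have "\<dots> = card ?V * (c0 + c1 a) + (if ?b = ty then (\<Sum>v\<in>?V. g v) else 0)"
      by (simp add: sum.distrib)
    finally have "A a s \<le> (card ?V * (c0 + c1 a) + (if ?b = ty then (\<Sum>v\<in>?V. g v) else 0)) / card ?V"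
      unfolding A_def using cpos by (simp add: divide_right_mono)
    also have "\<dots> = B a s" unfolding B_def G_def using cpos by (auto simp: field_simps)
    finally show ?thesis .
  qed
  have w: "0 \<le> (if a then p else 1 - p)" "0 \<le> (if s then q else 1 - q)" for a s :: bool
    using pq by auto
  have "measure_pmf.expectation (cmrt_step p q t) h =
    (\<Sum>a\<in>UNIV. (if a then p else 1 - p) * (\<Sum>s\<in>UNIV. (if s then q else 1 - q) * A a s))"
    unfolding A_def by (rule step_expect[OF pq inv])
  also have "\<dots> \<le> (\<Sum>a\<in>UNIV. (if a then p else 1 - p) * (\<Sum>s\<in>UNIV. (if s then q else 1 - q) * B a s))"
    by (intro sum_mono mult_left_mono w AB)
  also have "\<dots> = c0 + (piT p True * c1 True + piT p False * c1 False) + gam p q ty * G"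
    unfolding B_def piT_def gam_def by (cases ty) (simp_all add: UNIV_bool algebra_simps)
  finally show ?thesis unfolding G_def .
qed




definition wk :: "real \<Rightarrow> real \<Rightarrow> bool \<Rightarrow> nat \<Rightarrow> real" where
  "wk p q ty k = (if piT p ty + gam p q ty = 0 then 0
      else piT p ty / (piT p ty + gam p q ty) * (gam p q ty / (piT p ty + gam p q ty)) ^ k)"

definition wm :: "real \<Rightarrow> real \<Rightarrow> bool \<Rightarrow> nat \<Rightarrow> real" where
  "wm p q ty k = (if k = 0 then 0 else wk p q ty (k - 1))"

definition Dk :: "real \<Rightarrow> real \<Rightarrow> bool \<Rightarrow> nat \<Rightarrow> cmrt_tree \<Rightarrow> real" where
  "Dk p q ty k t = Xc t ty (\<lambda>d. d = k) - wk p q ty k * Xc t ty (\<lambda>_. True)"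

definition Dm :: "real \<Rightarrow> real \<Rightarrow> bool \<Rightarrow> nat \<Rightarrow> cmrt_tree \<Rightarrow> real" where
  "Dm p q ty k t = Xc t ty (\<lambda>d. Suc d = k) - wm p q ty k * Xc t ty (\<lambda>_. True)"

definition En :: "real \<Rightarrow> bool \<Rightarrow> cmrt_tree \<Rightarrow> real" where
  "En p ty t = Xc t ty (\<lambda>_. True) - piT p ty * length t"

context
  fixes p q :: real
  assumes pq: "0 \<le> p" "p \<le> 1" "0 \<le> q" "q \<le> 1"
begin

lemma piT_bounds: "0 \<le> piT p ty" "piT p ty \<le> 1"
  using pq unfolding piT_def by auto

lemma gam_bounds: "0 \<le> gam p q ty" "gam p q ty \<le> 1"
proof -
  have a: "0 \<le> p * q" "0 \<le> (1 - p) * (1 - q)" "0 \<le> p * (1 - q)" "0 \<le> (1 - p) * q"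
    using pq by auto
  have b: "p * q + (1 - p) * (1 - q) + (p * (1 - q) + (1 - p) * q) = 1" by (simp add: algebra_simps)
  show "0 \<le> gam p q ty" "gam p q ty \<le> 1" unfolding gam_def using a b by auto
qed

lemma wk_bounds: "0 \<le> wk p q ty k" "wk p q ty k \<le> 1"
proof -
  let ?a = "piT p ty" and ?g = "gam p q ty"
  note ab = piT_bounds[of ty] gam_bounds[of ty]
  show "0 \<le> wk p q ty k" unfolding wk_def using ab by auto
  show "wk p q ty k \<le> 1"
  proof (cases "?a + ?g = 0")
    case False
    hence pos: "?a + ?g > 0" using ab by linarith
    have "?a / (?a + ?g) \<le> 1" using pos ab by simp
    moreover have "(?g / (?a + ?g)) ^ k \<le> 1" using pos ab by (intro power_le_one) auto
    moreover have "0 \<le> (?g / (?a + ?g)) ^ k" using pos ab by simp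
    ultimately have "?a / (?a + ?g) * (?g / (?a + ?g)) ^ k \<le> 1 * 1"
      by (intro mult_mono) (use ab pos in auto)
    thus ?thesis unfolding wk_def using False by simp
  qed (simp add: wk_def)
qed

lemma wm_bounds: "0 \<le> wm p q ty k" "wm p q ty k \<le> 1"
  unfolding wm_def using wk_bounds by auto

lemma fixed_point:
  "(piT p ty + gam p q ty) * wk p q ty k = piT p ty * (if k = 0 then 1 else 0) + gam p q ty * wm p q ty k"
proof -
  let ?a = "piT p ty" and ?g = "gam p q ty"
  note ab = piT_bounds[of ty] gam_bounds[of ty]
  show ?thesis
  proof (cases "?a + ?g = 0")
    case True
    hence "?a = 0" "?g = 0" using ab by linarith+
    thus ?thesis unfolding wk_def wm_def by simp
  next
    case False
    show ?thesis
    proof (cases k)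
      case 0 thus ?thesis using False unfolding wk_def wm_def by simp
    next
      case (Suc j)
      define s where "s = ?a + ?g"
      have s0: "s \<noteq> 0" using False s_def by simp
      have "s * (?a / s * (?g / s) ^ Suc j) = ?a * (?g / s) ^ Suc j" using s0 by simp
      also have "\<dots> = ?g * (?a / s * (?g / s) ^ j)" using s0 by (simp add: field_simps)
      finally show ?thesis using False Suc unfolding wk_def wm_def s_def[symmetric] by simp
    qed
  qed
qed

lemma Xc_bounds: "0 \<le> Xc t ty P" "Xc t ty P \<le> Xc t ty (\<lambda>_. True)"
  unfolding Xc_def by (auto intro!: sum_nonneg sum_mono)

lemma N_pos: "inv_t t \<Longrightarrow> Xc t ty (\<lambda>_. True) > 0"
  using card_verts[of t ty] verts_finite[of t ty] verts_nonempty[of t ty]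
  by (metis card_gt_0_iff of_nat_0_less_iff)

lemma alg:
  fixes N X Xm w wmv c a g D Dmv :: real
  assumes "N > 0" "0 \<le> Xm" "Xm \<le> N" "0 \<le> wmv" "wmv \<le> 1" "0 \<le> g" "g \<le> 1"
    "(a + g) * w = a * c + g * wmv" "D = X - w * N" "Dmv = Xm - wmv * N"
  shows "2 * D * (a * (c - w) + g * ((Xm - X) / N)) \<le> \<bar>Dmv\<bar>"
proof -
  have f: "a * c - a * w = g * w - g * wmv" using assms(8) by (simp add: algebra_simps)
  have e0: "a * (c - w) + g * ((Xm - X) / N) = (N * (a * c - a * w) + g * (Xm - X)) / N"
    using assms(1) by (simp add: field_simps)
  have "N * (a * c - a * w) + g * (Xm - X) = g * (Dmv - D)"
  proof -
    have X: "X = D + w * N" "Xm = Dmv + wmv * N" using assms(9,10) by simp_all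
    show ?thesis unfolding f X by (simp add: algebra_simps)
  qed
  hence e1: "a * (c - w) + g * ((Xm - X) / N) = g * (Dmv - D) / N" using e0 by simp
  have e2: "2 * D * (Dmv - D) \<le> Dmv ^ 2 / 2"
    using sum_squares_ge_zero[of "D - Dmv/2" 0] by (simp add: power2_eq_square algebra_simps)
  have "wmv * N \<le> N" using mult_right_mono[of wmv 1 N] assms by simp
  moreover have "0 \<le> wmv * N" using assms by simp
  ultimately have "\<bar>Dmv\<bar> \<le> N" unfolding abs_le_iff using assms by linarith
  hence e3: "Dmv ^ 2 \<le> N * \<bar>Dmv\<bar>"
    by (metis abs_ge_zero mult_right_mono power2_abs power2_eq_square)
  have "2 * D * (g * (Dmv - D) / N) = g * (2 * D * (Dmv - D)) / N" by simp
  also have "\<dots> \<le> g * (Dmv ^ 2 / 2) / N"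
    using e2 assms by (intro divide_right_mono mult_left_mono) auto
  also have "\<dots> \<le> 1 * (Dmv ^ 2 / 2) / N"
    using assms by (intro divide_right_mono mult_right_mono) auto
  also have "\<dots> \<le> \<bar>Dmv\<bar>"
  proof -
    have "N * \<bar>Dmv\<bar> \<le> N * (\<bar>Dmv\<bar> * 2)" using assms(1) by simp
    hence "Dmv\<^sup>2 \<le> N * (\<bar>Dmv\<bar> * 2)" using e3 by linarith
    thus ?thesis using assms(1) by (simp add: field_simps)
  qed
  finally show ?thesis using e1 by simp
qed

lemma D_step:
  assumes inv: "inv_t t"
  shows "measure_pmf.expectation (cmrt_step p q t) (\<lambda>t'. (Dk p q ty k t') ^ 2)
     \<le> (Dk p q ty k t) ^ 2 + 4 + \<bar>Dm p q ty k t\<bar>"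
proof -
  define D where "D = Dk p q ty k t"
  define w where "w = wk p q ty k"
  define c where "c = (if k = 0 then 1 else (0::real))"
  define c1 where "c1 = (\<lambda>a. 2 * D * (if a = ty then c - w else 0))"
  define g where "g = (\<lambda>v. 2 * D * ((if Suc (outdeg t v) = k then 1 else 0) - (if outdeg t v = k then 1 else (0::real))))"
  have w01: "0 \<le> w" "w \<le> 1" unfolding w_def using wk_bounds by auto
  have hb: "(Dk p q ty k (t @ [(a, v)])) ^ 2 \<le> (D ^ 2 + 4) + c1 a + (if b = ty then g v else 0)"
    if v: "v \<in> verts_of_type t b" for a b v
  proof -
    have v1: "v \<in> {1..length t}" and tv: "fst (t ! (v - 1)) = b"
      using v unfolding verts_of_type_def by auto
    define e where "e = (if b = ty then (if Suc (outdeg t v) = k then 1 else 0) - (if outdeg t v = k then 1 else (0::real)) else 0)"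
    define d where "d = (if a = ty then c - w else 0)"
    have "Dk p q ty k (t @ [(a, v)]) = D + d + e"
      unfolding Dk_def D_def d_def e_def Xc_snoc[OF inv v1] tv c_def w_def
      by (auto simp: algebra_simps)
    moreover have "\<bar>d + e\<bar> \<le> 2" unfolding d_def e_def c_def using w01 by auto
    hence "(d + e) ^ 2 \<le> 4"
      by (metis abs_le_square_iff abs_numeral power2_eq_square numeral_times_numeral semiring_norm(12) semiring_norm(13))
    ultimately have "(Dk p q ty k (t @ [(a, v)])) ^ 2 \<le> D ^ 2 + 4 + 2 * D * (d + e)"
      by (simp add: power2_eq_square algebra_simps)
    thus ?thesis unfolding c1_def g_def d_def e_def by (auto simp: algebra_simps)
  qed
  have E1: "measure_pmf.expectation (cmrt_step p q t) (\<lambda>t'. (Dk p q ty k t') ^ 2) \<le>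
     (D ^ 2 + 4) + (piT p True * c1 True + piT p False * c1 False)
        + gam p q ty * ((\<Sum>v\<in>verts_of_type t ty. g v) / card (verts_of_type t ty))"
    by (rule step_bound_gen[OF pq inv]) (rule hb)
  have sg: "(\<Sum>v\<in>verts_of_type t ty. g v) = 2 * D * (Xc t ty (\<lambda>d. Suc d = k) - Xc t ty (\<lambda>d. d = k))"
    using sum_verts_ind[where P="\<lambda>d. Suc d = k" and t=t and ty=ty] sum_verts_ind[where P="\<lambda>d. d = k" and t=t and ty=ty]
    unfolding g_def sum_distrib_left[symmetric] sum_subtractf by simp
  have sc: "piT p True * c1 True + piT p False * c1 False = 2 * D * (piT p ty * (c - w))"
    unfolding c1_def by (cases ty) (auto simp: algebra_simps)
  have "2 * D * (piT p ty * (c - w) + gam p q ty * ((Xc t ty (\<lambda>d. Suc d = k) - Xc t ty (\<lambda>d. d = k)) / Xc t ty (\<lambda>_. True)))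
     \<le> \<bar>Dm p q ty k t\<bar>"
    by (rule alg[OF N_pos[OF inv] Xc_bounds wm_bounds[of ty k] gam_bounds[of ty]])
       (simp_all add: fixed_point c_def w_def D_def Dk_def Dm_def)
  thus ?thesis using E1 unfolding sg sc card_verts D_def
    by (simp add: algebra_simps)
qed

lemma En_step:
  assumes inv: "inv_t t"
  shows "measure_pmf.expectation (cmrt_step p q t) (\<lambda>t'. (En p ty t') ^ 2) \<le> (En p ty t) ^ 2 + 1"
proof -
  define E where "E = En p ty t"
  define c1 where "c1 = (\<lambda>a. 2 * E * ((if a = ty then 1 else 0) - piT p ty))"
  have hb: "(En p ty (t @ [(a, v)])) ^ 2 \<le> (E ^ 2 + 1) + c1 a + (if b = ty then (\<lambda>_. 0) v else 0)"
    if v: "v \<in> verts_of_type t b" for a b v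
  proof -
    have v1: "v \<in> {1..length t}" using v unfolding verts_of_type_def by auto
    define d where "d = (if a = ty then 1 else 0) - piT p ty"
    have "En p ty (t @ [(a, v)]) = E + d"
      unfolding En_def E_def d_def Xc_snoc[OF inv v1]
      by (auto simp: algebra_simps)
    moreover have "\<bar>d\<bar> \<le> 1" unfolding d_def using piT_bounds[of ty] by auto
    hence "d ^ 2 \<le> 1" by (simp only: abs_square_le_1)
    ultimately have "(En p ty (t @ [(a, v)])) ^ 2 \<le> E ^ 2 + 1 + 2 * E * d"
      by (simp add: power2_eq_square algebra_simps)
    thus ?thesis unfolding c1_def d_def by (auto simp: algebra_simps)
  qed
  have E1: "measure_pmf.expectation (cmrt_step p q t) (\<lambda>t'. (En p ty t') ^ 2) \<le>
     (E ^ 2 + 1) + (piT p True * c1 True + piT p False * c1 False)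
        + gam p q ty * ((\<Sum>v\<in>verts_of_type t ty. (\<lambda>_. 0) v) / card (verts_of_type t ty))"
    by (rule step_bound_gen[OF pq inv]) (rule hb)
  have sc: "piT p True * c1 True + piT p False * c1 False = 0"
    unfolding c1_def piT_def by (cases ty) (auto simp: algebra_simps)
  show ?thesis using E1 unfolding sc E_def by simp
qed

end




lemma expect_bind_le:
  fixes f g :: "'b \<Rightarrow> real"
  assumes fin: "finite (set_pmf M)"
    and finK: "\<And>t. t \<in> set_pmf M \<Longrightarrow> finite (set_pmf (K t))"
    and le: "\<And>t. t \<in> set_pmf M \<Longrightarrow> measure_pmf.expectation (K t) f \<le> g t"
  shows "measure_pmf.expectation (bind_pmf M K) f \<le> measure_pmf.expectation M g"
proof -
  have "measure_pmf.expectation (bind_pmf M K) f = (\<Sum>a\<in>set_pmf M. pmf M a *\<^sub>R measure_pmf.expectation (K a) f)"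
    by (rule pmf_expectation_bind[OF fin finK]) auto
  also have "\<dots> \<le> (\<Sum>a\<in>set_pmf M. pmf M a *\<^sub>R g a)"
    by (intro sum_mono) (simp add: le mult_left_mono)
  also have "\<dots> = measure_pmf.expectation M g"
    by (rule integral_measure_pmf[OF fin, symmetric]) auto
  finally show ?thesis .
qed

lemma growth:
  fixes e g :: "nat \<Rightarrow> real"
  assumes rec: "\<And>m. e (Suc m) \<le> e m + g m"
    and gsmall: "\<And>\<epsilon>::real. \<epsilon> > 0 \<Longrightarrow> \<exists>N. \<forall>m\<ge>N. g m \<le> \<epsilon> * m"
    and eps: "\<epsilon> > 0"
  shows "\<exists>N. \<forall>m\<ge>N. e m \<le> \<epsilon> * (real m)\<^sup>2"
proof -
  have "\<exists>N. \<forall>m\<ge>N. g m \<le> (\<epsilon> / 2) * m" by (rule gsmall) (use eps in simp)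
  then obtain N0 where N0: "\<And>m. m \<ge> N0 \<Longrightarrow> g m \<le> (\<epsilon> / 2) * m" by auto
  have bound: "e m \<le> e N0 + (\<epsilon> / 2) * (real m)\<^sup>2" if "m \<ge> N0" for m
    using that
  proof (induction m rule: dec_induct)
    case base
    then show ?case using eps by simp
  next
    case (step m)
    have "e (Suc m) \<le> e m + g m" by (rule rec)
    also have "\<dots> \<le> e N0 + (\<epsilon> / 2) * (real m)\<^sup>2 + (\<epsilon> / 2) * m"
      using step N0 by (intro add_mono) auto
    also have "\<dots> \<le> e N0 + (\<epsilon> / 2) * (real (Suc m))\<^sup>2"
      using eps by (simp add: power2_eq_square algebra_simps)
    finally show ?case .
  qed
  define N1 where "N1 = max (Suc N0) (nat \<lceil>2 * \<bar>e N0\<bar> / \<epsilon>\<rceil>)"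
  have "e m \<le> \<epsilon> * (real m)\<^sup>2" if m: "m \<ge> N1" for m
  proof -
    have m1: "real m \<ge> 1" and mN0: "m \<ge> N0" using m unfolding N1_def by auto
    have "2 * \<bar>e N0\<bar> / \<epsilon> \<le> real m" using m unfolding N1_def by linarith
    hence "2 * \<bar>e N0\<bar> \<le> \<epsilon> * real m" using eps by (simp add: field_simps)
    moreover have "real m \<le> (real m)\<^sup>2" using m1 by (simp add: power2_eq_square)
    hence "\<epsilon> * real m \<le> \<epsilon> * (real m)\<^sup>2" using eps by simp
    ultimately have "e N0 \<le> (\<epsilon> / 2) * (real m)\<^sup>2" by linarith
    thus ?thesis using bound[OF mN0] by linarith
  qed
  thus ?thesis by blast
qed

lemma arch_eps: fixes c \<epsilon> :: real assumes "\<epsilon> > 0" shows "\<exists>N::nat. \<forall>m\<ge>N. c \<le> \<epsilon> * real m"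
proof -
  obtain N :: nat where N: "c / \<epsilon> \<le> N" using real_arch_simple by blast
  have "c \<le> \<epsilon> * real m" if "m \<ge> N" for m
  proof -
    have "real N \<le> real m" using that by simp
    hence "c / \<epsilon> \<le> real m" using N by linarith
    thus ?thesis using assms by (simp add: field_simps)
  qed
  thus ?thesis by blast
qed

lemma abs_le_sq: fixes x c :: real assumes "c > 0" shows "\<bar>x\<bar> \<le> x\<^sup>2 / c + c / 4"
proof -
  have "0 \<le> (\<bar>x\<bar> - c / 2)\<^sup>2" by simp
  hence "c * \<bar>x\<bar> \<le> x\<^sup>2 + c\<^sup>2 / 4" by (simp add: power2_eq_square algebra_simps)
  thus ?thesis using assms by (simp add: field_simps power2_eq_square)
qed

context
  fixes p q :: real
  assumes pq: "0 \<le> p" "p \<le> 1" "0 \<le> q" "q \<le> 1"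
begin

abbreviation "M \<equiv> cmrt_aux p q"

lemma finM: "finite (set_pmf (M m))" using aux_props by blast
lemma invM: "t \<in> set_pmf (M m) \<Longrightarrow> inv_t t \<and> length t = m + 2" using aux_props by blast

lemma intM[simp]: "integrable (measure_pmf (M m)) (f :: _ \<Rightarrow> real)"
  by (rule integrable_measure_pmf_finite[OF finM])

lemma Dm_0: "Dm p q ty 0 t = 0" unfolding Dm_def wm_def Xc_def by simp
lemma Dm_Suc: "Dm p q ty (Suc j) t = Dk p q ty j t" unfolding Dm_def wm_def Dk_def Xc_def by simp

lemma e_rec: "measure_pmf.expectation (M (Suc m)) (\<lambda>t. (Dk p q ty k t)\<^sup>2) \<le>
   measure_pmf.expectation (M m) (\<lambda>t. (Dk p q ty k t)\<^sup>2) + (4 + measure_pmf.expectation (M m) (\<lambda>t. \<bar>Dm p q ty k t\<bar>))"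
proof -
  have "measure_pmf.expectation (M (Suc m)) (\<lambda>t. (Dk p q ty k t)\<^sup>2) \<le>
     measure_pmf.expectation (M m) (\<lambda>t. (Dk p q ty k t)\<^sup>2 + 4 + \<bar>Dm p q ty k t\<bar>)"
    unfolding cmrt_aux.simps
    by (rule expect_bind_le[OF finM]) (use invM finite_step D_step[OF pq] in blast)+
  also have "\<dots> = measure_pmf.expectation (M m) (\<lambda>t. (Dk p q ty k t)\<^sup>2) + (4 + measure_pmf.expectation (M m) (\<lambda>t. \<bar>Dm p q ty k t\<bar>))"
    by simp
  finally show ?thesis .
qed

lemma en_rec: "measure_pmf.expectation (M (Suc m)) (\<lambda>t. (En p ty t)\<^sup>2) \<le>
   measure_pmf.expectation (M m) (\<lambda>t. (En p ty t)\<^sup>2) + 1"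
proof -
  have "measure_pmf.expectation (M (Suc m)) (\<lambda>t. (En p ty t)\<^sup>2) \<le>
     measure_pmf.expectation (M m) (\<lambda>t. (En p ty t)\<^sup>2 + 1)"
    unfolding cmrt_aux.simps
    by (rule expect_bind_le[OF finM]) (use invM finite_step En_step[OF pq] in blast)+
  also have "\<dots> = measure_pmf.expectation (M m) (\<lambda>t. (En p ty t)\<^sup>2) + 1"
    by simp
  finally show ?thesis .
qed

lemma en_small: "\<epsilon> > 0 \<Longrightarrow> \<exists>N. \<forall>m\<ge>N. measure_pmf.expectation (M m) (\<lambda>t. (En p ty t)\<^sup>2) \<le> \<epsilon> * (real m)\<^sup>2"
proof (rule growth[where g = "\<lambda>_. 1"])
  show "measure_pmf.expectation (M (Suc m)) (\<lambda>t. (En p ty t)\<^sup>2) \<le>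
   measure_pmf.expectation (M m) (\<lambda>t. (En p ty t)\<^sup>2) + 1" for m by (rule en_rec)
  fix \<epsilon> :: real assume "\<epsilon> > 0"
  thus "\<exists>N. \<forall>m::nat\<ge>N. 1 \<le> \<epsilon> * real m" by (rule arch_eps)
qed

lemma e_small: "\<forall>\<epsilon>>0. \<exists>N. \<forall>m\<ge>N. measure_pmf.expectation (M m) (\<lambda>t. (Dk p q ty k t)\<^sup>2) \<le> \<epsilon> * (real m)\<^sup>2"
proof (induction k)
  case 0
  show ?case
  proof (intro allI impI)
    fix \<epsilon> :: real assume eps: "\<epsilon> > 0"
    show "\<exists>N. \<forall>m\<ge>N. measure_pmf.expectation (M m) (\<lambda>t. (Dk p q ty 0 t)\<^sup>2) \<le> \<epsilon> * (real m)\<^sup>2"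
    proof (rule growth[OF _ _ eps])
      show "measure_pmf.expectation (M (Suc m)) (\<lambda>t. (Dk p q ty 0 t)\<^sup>2) \<le>
        measure_pmf.expectation (M m) (\<lambda>t. (Dk p q ty 0 t)\<^sup>2) + 4" for m
        using e_rec[of m ty 0] by (simp add: Dm_0)
      fix \<epsilon> :: real assume "\<epsilon> > 0"
      thus "\<exists>N. \<forall>m::nat\<ge>N. 4 \<le> \<epsilon> * real m" by (rule arch_eps)
    qed
  qed
next
  case (Suc j)
  show ?case
  proof (intro allI impI)
    fix \<epsilon> :: real assume eps: "\<epsilon> > 0"
    let ?e = "\<lambda>m. measure_pmf.expectation (M m) (\<lambda>t. (Dk p q ty j t)\<^sup>2)"
    let ?d = "\<lambda>m. measure_pmf.expectation (M m) (\<lambda>t. \<bar>Dk p q ty j t\<bar>)"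
    show "\<exists>N. \<forall>m\<ge>N. measure_pmf.expectation (M m) (\<lambda>t. (Dk p q ty (Suc j) t)\<^sup>2) \<le> \<epsilon> * (real m)\<^sup>2"
    proof (rule growth[OF _ _ eps])
      show "measure_pmf.expectation (M (Suc m)) (\<lambda>t. (Dk p q ty (Suc j) t)\<^sup>2) \<le>
        measure_pmf.expectation (M m) (\<lambda>t. (Dk p q ty (Suc j) t)\<^sup>2) + (4 + ?d m)" for m
        using e_rec[of m ty "Suc j"] by (simp add: Dm_Suc)
      fix \<epsilon> :: real assume eps': "\<epsilon> > 0"
      define \<delta> where "\<delta> = \<epsilon> / 3"
      have dpos: "\<delta> > 0" using eps' by (simp add: \<delta>_def)
      obtain N1 where N1: "\<forall>m\<ge>N1. ?e m \<le> \<delta>\<^sup>2 * (real m)\<^sup>2"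
        using Suc.IH dpos by (meson zero_less_power)
      obtain N2 :: nat where N2: "\<forall>m\<ge>N2. 4 \<le> \<delta> * m" using arch_eps[OF dpos] by blast
      have "4 + ?d m \<le> \<epsilon> * m" if m: "m \<ge> max (max N1 N2) 1" for m
      proof -
        have m1: "real m \<ge> 1" using m by auto
        have c: "\<delta> * m > 0" using dpos m1 by simp
        have "?d m \<le> measure_pmf.expectation (M m) (\<lambda>t. (Dk p q ty j t)\<^sup>2 / (\<delta> * m) + (\<delta> * m) / 4)"
          by (rule integral_mono) (auto intro: abs_le_sq[OF c])
        also have "\<dots> = ?e m / (\<delta> * m) + (\<delta> * m) / 4" by simp
        also have "?e m / (\<delta> * m) \<le> \<delta> * m"
          using N1 m c by (simp add: field_simps power2_eq_square)
        finally have "?d m \<le> \<delta> * m + \<delta> * m / 4" by simp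
        moreover have "4 \<le> \<delta> * m" using N2 m by auto
        ultimately show ?thesis unfolding \<delta>_def by linarith
      qed
      thus "\<exists>N. \<forall>m\<ge>N. 4 + ?d m \<le> \<epsilon> * m" by blast
    qed
  qed
qed

end




lemma Ndeg_split: "real (Ndeg t k) = Xc t True (\<lambda>d. d = k) + Xc t False (\<lambda>d. d = k)"
proof -
  have "real (Ndeg t k) = (\<Sum>v\<in>{v \<in> {1..length t}. outdeg t v = k}. 1)"
    unfolding Ndeg_def by simp
  also have "\<dots> = (\<Sum>v\<in>{1..length t}. if outdeg t v = k then 1 else 0)"
    by (rule sum.inter_filter) simp
  also have "\<dots> = Xc t True (\<lambda>d. d = k) + Xc t False (\<lambda>d. d = k)"
    unfolding Xc_def sum.distrib[symmetric] by (rule sum.cong) auto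
  finally show ?thesis .
qed

lemma len_split: "real (length t) = Xc t True (\<lambda>_. True) + Xc t False (\<lambda>_. True)"
proof -
  have "real (length t) = (\<Sum>v\<in>{1..length t}. 1)" by simp
  also have "\<dots> = Xc t True (\<lambda>_. True) + Xc t False (\<lambda>_. True)"
    unfolding Xc_def sum.distrib[symmetric] by (rule sum.cong) auto
  finally show ?thesis .
qed

lemma pk_eq:
  assumes "0 < p" "p \<le> 1" "0 \<le> q" "q \<le> 1"
  shows "pk p q k = piT p True * wk p q True k + piT p False * wk p q False k"
proof -
  define \<alpha> where "\<alpha> = p * q + (1 - p) * (1 - q)"
  define \<beta> where "\<beta> = p * (1 - q) + (1 - p) * q"
  have a0: "0 \<le> \<alpha>" "0 \<le> \<beta>" unfolding \<alpha>_def \<beta>_def using assms by auto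
  have pa: "p + \<alpha> > 0" using assms a0 by linarith
  have rA: "rA p q = \<alpha> / p" unfolding rA_def \<alpha>_def using assms by (simp add: field_simps)
  have A1: "p / (1 + rA p q) = p * (p / (p + \<alpha>))" unfolding rA using assms pa
    by (simp add: field_simps power2_eq_square)
  have A2: "rA p q / (1 + rA p q) = \<alpha> / (p + \<alpha>)" unfolding rA using assms pa
    by (simp add: field_simps)
  have T: "p / (1 + rA p q) * (rA p q / (1 + rA p q)) ^ k = piT p True * wk p q True k"
    unfolding A1 A2 wk_def piT_def gam_def \<alpha>_def[symmetric] using pa by simp
  have F: "(if p = 1 then 0 else (1 - p) / (1 + rB p q) * (rB p q / (1 + rB p q)) ^ k)
      = piT p False * wk p q False k"
  proof (cases "p = 1")
    case True thus ?thesis unfolding piT_def by simp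
  next
    case False
    hence p1: "1 - p > 0" using assms by simp
    have pb: "1 - p + \<beta> > 0" using p1 a0 by linarith
    have rB: "rB p q = \<beta> / (1 - p)" unfolding rB_def \<beta>_def using p1 by (simp add: field_simps)
    have B1: "(1 - p) / (1 + rB p q) = (1 - p) * ((1 - p) / (1 - p + \<beta>))" unfolding rB using p1 pb
      by (simp add: field_simps power2_eq_square)
    have B0: "1 + rB p q = (1 - p + \<beta>) / (1 - p)" unfolding rB using p1 by (simp add: field_simps)
    have B2: "rB p q / (1 + rB p q) = \<beta> / (1 - p + \<beta>)" unfolding B0 unfolding rB using p1 pb
      by simp
    show ?thesis using False pb unfolding B1 B2 wk_def piT_def gam_def \<beta>_def[symmetric] by simp
  qed
  show ?thesis unfolding pk_def T F ..
qed

lemma sq4: fixes a b c d :: real shows "(a + b + c + d)\<^sup>2 \<le> 4 * (a\<^sup>2 + b\<^sup>2 + c\<^sup>2 + d\<^sup>2)"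
proof -
  have "0 \<le> (a - b)\<^sup>2 + (a - c)\<^sup>2 + (a - d)\<^sup>2 + (b - c)\<^sup>2 + (b - d)\<^sup>2 + (c - d)\<^sup>2" by simp
  thus ?thesis by (simp add: power2_eq_square algebra_simps)
qed

lemma wsq: fixes w x :: real assumes "0 \<le> w" "w \<le> 1" shows "(w * x)\<^sup>2 \<le> x\<^sup>2"
proof -
  have "w\<^sup>2 \<le> 1" using assms by (simp add: abs_square_le_1)
  hence "w\<^sup>2 * x\<^sup>2 \<le> 1 * x\<^sup>2" by (intro mult_right_mono) auto
  thus ?thesis by (simp add: power_mult_distrib)
qed




theorem theorem3p1:
  fixes p q :: real and k :: nat
  assumes "0 < p" "p \<le> 1" "0 \<le> q" "q \<le> 1"
  shows "\<forall>\<epsilon>>0. ((\<lambda>n. measure_pmf.prob (cmrt p q n)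
            {t. \<bar>real (Ndeg t k) / real n - pk p q k\<bar> > \<epsilon>}) \<longlongrightarrow> 0) at_top"
proof (intro allI impI)
  fix \<epsilon> :: real assume eps: "\<epsilon> > 0"
  have pq: "0 \<le> p" "p \<le> 1" "0 \<le> q" "q \<le> 1" using assms by auto
  show "((\<lambda>n. measure_pmf.prob (cmrt p q n)
            {t. \<bar>real (Ndeg t k) / real n - pk p q k\<bar> > \<epsilon>}) \<longlongrightarrow> 0) at_top"
  proof (rule LIMSEQ_I)
    fix r :: real assume r: "r > 0"
    define \<eta> where "\<eta> = r * \<epsilon>\<^sup>2 / 32"
    have eta: "\<eta> > 0" unfolding \<eta>_def using r eps by simp
    obtain N1 where N1: "\<forall>m\<ge>N1. measure_pmf.expectation (cmrt_aux p q m) (\<lambda>t. (Dk p q True k t)\<^sup>2) \<le> \<eta> * (real m)\<^sup>2"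
      using e_small[OF pq, of True k] eta by blast
    obtain N2 where N2: "\<forall>m\<ge>N2. measure_pmf.expectation (cmrt_aux p q m) (\<lambda>t. (Dk p q False k t)\<^sup>2) \<le> \<eta> * (real m)\<^sup>2"
      using e_small[OF pq, of False k] eta by blast
    obtain N3 where N3: "\<forall>m\<ge>N3. measure_pmf.expectation (cmrt_aux p q m) (\<lambda>t. (En p True t)\<^sup>2) \<le> \<eta> * (real m)\<^sup>2"
      using en_small[OF pq eta, of True] by blast
    obtain N4 where N4: "\<forall>m\<ge>N4. measure_pmf.expectation (cmrt_aux p q m) (\<lambda>t. (En p False t)\<^sup>2) \<le> \<eta> * (real m)\<^sup>2"
      using en_small[OF pq eta, of False] by blast
    define N0 where "N0 = max (max N1 N2) (max N3 N4) + 2"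
    have "norm (measure_pmf.prob (cmrt p q n) {t. \<bar>real (Ndeg t k) / real n - pk p q k\<bar> > \<epsilon>} - 0) < r"
      if n: "n \<ge> N0" for n
    proof -
      define m where "m = n - 2"
      have nm: "n = m + 2" and mge: "m \<ge> N1" "m \<ge> N2" "m \<ge> N3" "m \<ge> N4"
        using n unfolding m_def N0_def by auto
      have Mn: "cmrt p q n = cmrt_aux p q m" unfolding cmrt_def m_def ..
      have npos: "real n > 0" using nm by simp
      define P where "P = pk p q k"
      define u where "u = (\<lambda>t. (real (Ndeg t k) - P * real n)\<^sup>2)"
      define c where "c = \<epsilon>\<^sup>2 * (real n)\<^sup>2"
      have cpos: "c > 0" unfolding c_def using eps npos by simp
      let ?M = "cmrt_aux p q m"
      have sub: "{t. \<bar>real (Ndeg t k) / real n - P\<bar> > \<epsilon>} \<subseteq> {t \<in> space (measure_pmf ?M). u t \<ge> c}"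
      proof
        fix t assume "t \<in> {t. \<bar>real (Ndeg t k) / real n - P\<bar> > \<epsilon>}"
        hence "\<epsilon> < \<bar>real (Ndeg t k) / real n - P\<bar>" by simp
        also have "\<bar>real (Ndeg t k) / real n - P\<bar> = \<bar>real (Ndeg t k) - P * real n\<bar> / real n"
          using npos by (simp add: field_simps)
        finally have "\<epsilon> * real n < \<bar>real (Ndeg t k) - P * real n\<bar>" using npos by (simp add: field_simps)
        hence "(\<epsilon> * real n)\<^sup>2 \<le> \<bar>real (Ndeg t k) - P * real n\<bar>\<^sup>2"
          using eps npos by (intro power_mono) auto
        thus "t \<in> {t \<in> space (measure_pmf ?M). u t \<ge> c}"
          unfolding u_def c_def by (simp add: power_mult_distrib)
      qed
      have "measure_pmf.prob ?M {t. \<bar>real (Ndeg t k) / real n - P\<bar> > \<epsilon>}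
          \<le> measure_pmf.prob ?M {t \<in> space (measure_pmf ?M). u t \<ge> c}"
        by (rule measure_pmf.finite_measure_mono[OF sub]) simp
      also have "\<dots> \<le> measure_pmf.expectation ?M u / c"
        by (rule integral_Markov_inequality_measure) (auto simp: u_def cpos intM[OF pq])
      also have "measure_pmf.expectation ?M u \<le> measure_pmf.expectation ?M (\<lambda>t.
          4 * ((Dk p q True k t)\<^sup>2 + (Dk p q False k t)\<^sup>2 + (En p True t)\<^sup>2 + (En p False t)\<^sup>2))"
      proof (rule integral_mono_AE)
        show "integrable (measure_pmf ?M) u" by (rule intM[OF pq])
        show "integrable (measure_pmf ?M) (\<lambda>t.
          4 * ((Dk p q True k t)\<^sup>2 + (Dk p q False k t)\<^sup>2 + (En p True t)\<^sup>2 + (En p False t)\<^sup>2))"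
          by (rule intM[OF pq])
        show "AE t in measure_pmf ?M. u t \<le> 4 * ((Dk p q True k t)\<^sup>2 + (Dk p q False k t)\<^sup>2 + (En p True t)\<^sup>2 + (En p False t)\<^sup>2)"
          unfolding AE_measure_pmf_iff
        proof
          fix t assume "t \<in> set_pmf ?M"
          hence len: "real (length t) = real n" using invM[OF pq] nm by simp
          have dec: "real (Ndeg t k) - P * real n = Dk p q True k t + Dk p q False k t
              + wk p q True k * En p True t + wk p q False k * En p False t"
            unfolding P_def pk_eq[OF assms] Ndeg_split Dk_def En_def len[symmetric] len_split
            by (simp add: algebra_simps)
          have "u t \<le> 4 * ((Dk p q True k t)\<^sup>2 + (Dk p q False k t)\<^sup>2 + (wk p q True k * En p True t)\<^sup>2 + (wk p q False k * En p False t)\<^sup>2)"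
            unfolding u_def dec by (rule sq4)
          also have "\<dots> \<le> 4 * ((Dk p q True k t)\<^sup>2 + (Dk p q False k t)\<^sup>2 + (En p True t)\<^sup>2 + (En p False t)\<^sup>2)"
            using wsq[OF wk_bounds[OF pq, of True k], of "En p True t"]
              wsq[OF wk_bounds[OF pq, of False k], of "En p False t"] by simp
          finally show "u t \<le> 4 * ((Dk p q True k t)\<^sup>2 + (Dk p q False k t)\<^sup>2 + (En p True t)\<^sup>2 + (En p False t)\<^sup>2)" .
        qed
      qed
      also have "measure_pmf.expectation ?M (\<lambda>t.
          4 * ((Dk p q True k t)\<^sup>2 + (Dk p q False k t)\<^sup>2 + (En p True t)\<^sup>2 + (En p False t)\<^sup>2))
        = 4 * (measure_pmf.expectation ?M (\<lambda>t. (Dk p q True k t)\<^sup>2) + measure_pmf.expectation ?M (\<lambda>t. (Dk p q False k t)\<^sup>2)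
          + measure_pmf.expectation ?M (\<lambda>t. (En p True t)\<^sup>2) + measure_pmf.expectation ?M (\<lambda>t. (En p False t)\<^sup>2))"
        by (simp add: intM[OF pq])
      also have "\<dots> \<le> 4 * (\<eta> * (real m)\<^sup>2 + \<eta> * (real m)\<^sup>2 + \<eta> * (real m)\<^sup>2 + \<eta> * (real m)\<^sup>2)"
        using N1 N2 N3 N4 mge by (intro mult_left_mono add_mono) auto
      also have "\<dots> \<le> 16 * \<eta> * (real n)\<^sup>2"
      proof -
        have "(real m)\<^sup>2 \<le> (real n)\<^sup>2" using nm by (intro power_mono) auto
        thus ?thesis using eta by simp
      qed
      finally have "measure_pmf.prob ?M {t. \<bar>real (Ndeg t k) / real n - P\<bar> > \<epsilon>} \<le> 16 * \<eta> * (real n)\<^sup>2 / c"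
        using cpos by (simp add: divide_right_mono)
      also have "\<dots> = r / 2" unfolding c_def \<eta>_def using eps npos by (simp add: field_simps power2_eq_square)
      finally have "measure_pmf.prob ?M {t. \<bar>real (Ndeg t k) / real n - P\<bar> > \<epsilon>} < r" using r by simp
      thus ?thesis unfolding Mn P_def by simp
    qed
    thus "\<exists>no. \<forall>n\<ge>no. norm (measure_pmf.prob (cmrt p q n) {t. \<bar>real (Ndeg t k) / real n - pk p q k\<bar> > \<epsilon>} - 0) < r"
      by blast
  qed
qed


end
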